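(* Let $f:\{0,1\}^N\to\{0,1\}$ be a non-constant total function. Then there is a promise $P\subseteq\{0,1\}^N$ such that \[\R(f|_P)=1,\qquad \R_0(f|_P)\ge\frac{\R_0(f)^{1/3}}{6}.\]
   Context: $f|_P$ is the restriction of $f$ to $P$ (a partial function). $\R$ is bounded-error (error at most $1/3$) randomized query complexity and $\R_0$ zero-error randomized query complexity (maximum over inputs in the domain of the expected number of queries); algorithms need only be correct on the domain. *)

theory Defs
  imports Complex_Main "HOL-Probability.Probability_Mass_Function"
begin

text \<open>Inputs in {0,1}^N are boolean lists of length N. A deterministic decision tree
  either outputs a bit or queries position i and branches on the answer.\<close>

datatype dtree = Leaf bool | Node nat dtree dtree

definition cube :: "nat \<Rightarrow> bool list set" where
  "cube N = {x. length x = N}"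

fun eval :: "dtree \<Rightarrow> bool list \<Rightarrow> bool" where
  "eval (Leaf b) x = b"
| "eval (Node i l r) x = (if x ! i then eval r x else eval l x)"

fun qcount :: "dtree \<Rightarrow> bool list \<Rightarrow> nat" where
  "qcount (Leaf b) x = 0"
| "qcount (Node i l r) x = Suc (if x ! i then qcount r x else qcount l x)"

fun valid :: "nat \<Rightarrow> dtree \<Rightarrow> bool" where
  "valid N (Leaf b) = True"
| "valid N (Node i l r) = (i < N \<and> valid N l \<and> valid N r)"

definition valid_alg :: "nat \<Rightarrow> dtree pmf \<Rightarrow> bool" where
  "valid_alg N A = (\<forall>t\<in>set_pmf A. valid N t)"

definition R_alg :: "nat \<Rightarrow> (bool list \<Rightarrow> bool) \<Rightarrow> bool list set \<Rightarrow> nat \<Rightarrow> bool" where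
  "R_alg N f P d = (\<exists>A. valid_alg N A
      \<and> (\<forall>x\<in>P. measure_pmf.prob A {t. eval t x \<noteq> f x} \<le> 1/3)
      \<and> (\<forall>t\<in>set_pmf A. \<forall>x\<in>P. qcount t x \<le> d))"

definition R :: "nat \<Rightarrow> (bool list \<Rightarrow> bool) \<Rightarrow> bool list set \<Rightarrow> nat" where
  "R N f P = (LEAST d. R_alg N f P d)"

text \<open>Computed in ennreal (so infinite expectations are
  not lost); it is always finite (at most N), so we convert to real.\<close>
definition R0 :: "nat \<Rightarrow> (bool list \<Rightarrow> bool) \<Rightarrow> bool list set \<Rightarrow> real" where
  "R0 N f P = enn2real (INF A \<in> {A. valid_alg N A \<and> (\<forall>t\<in>set_pmf A. \<forall>x\<in>P. eval t x = f x)}.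
      SUP x\<in>P. \<integral>\<^sup>+ t. ennreal (real (qcount t x)) \<partial>(measure_pmf A))"

end

theory Submission
  imports Defs
begin



definition flip :: "nat set \<Rightarrow> bool list \<Rightarrow> bool list" where
  "flip B x = map (\<lambda>i. x!i \<noteq> (i\<in>B)) [0..<length x]"

lemma length_flip[simp]: "length (flip B x) = length x"
  by (simp add: flip_def)

lemma nth_flip[simp]: "i < length x \<Longrightarrow> flip B x ! i = (x!i \<noteq> (i\<in>B))"
  by (simp add: flip_def)

lemma flip_cube[simp]: "x \<in> cube N \<Longrightarrow> flip B x \<in> cube N"
  by (simp add: cube_def)

lemma flip_flip: "flip A (flip B x) = flip ((A - B) \<union> (B - A)) x"
  by (rule nth_equalityI) auto

lemma flip_empty[simp]: "flip {} x = x"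
  by (rule nth_equalityI) auto

lemma flip_diff: "x \<in> cube N \<Longrightarrow> y \<in> cube N \<Longrightarrow> flip {i. i < N \<and> x!i \<noteq> y!i} x = y"
  by (rule nth_equalityI) (auto simp: cube_def)

definition bsat :: "nat \<Rightarrow> (bool list \<Rightarrow> bool) \<Rightarrow> bool list \<Rightarrow> nat set set \<Rightarrow> bool" where
  "bsat N f x BB = (BB \<subseteq> Pow {..<N} \<and> pairwise disjnt BB \<and> (\<forall>B\<in>BB. B \<noteq> {} \<and> f (flip B x) \<noteq> f x))"

lemma bsat_card: assumes "bsat N f x BB" shows "finite BB" "card BB \<le> N"
proof -
  have fin: "finite BB" using assms unfolding bsat_def
    by (meson finite_Pow_iff finite_lessThan finite_subset)
  show "finite BB" by fact
  have "card BB = (\<Sum>B\<in>BB. 1)" by simp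
  also have "\<dots> \<le> sum card BB"
    apply (rule sum_mono) using assms unfolding bsat_def
    by (metis One_nat_def Suc_leI card_gt_0_iff finite_lessThan finite_subset PowD subsetD)
  also have "\<dots> = card (\<Union>BB)"
    apply (rule card_Union_disjoint[symmetric]) using assms unfolding bsat_def
    by (auto intro: finite_subset[of _ "{..<N}"])
  also have "\<dots> \<le> card {..<N}"
    apply (rule card_mono) using assms unfolding bsat_def by auto
  finally show "card BB \<le> N" by simp
qed

definition bsv :: "nat \<Rightarrow> (bool list \<Rightarrow> bool) \<Rightarrow> nat" where
  "bsv N f = Max {card BB | x BB. x \<in> cube N \<and> bsat N f x BB}"

lemma bsv_fin: "finite {card BB | x BB. x \<in> cube N \<and> bsat N f x BB}"
  by (rule finite_subset[of _ "{..N}"]) (auto dest: bsat_card)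

lemma bsv_ge: "x \<in> cube N \<Longrightarrow> bsat N f x BB \<Longrightarrow> card BB \<le> bsv N f"
  unfolding bsv_def by (rule Max_ge[OF bsv_fin]) blast

lemma bsv_attained: assumes "x0 \<in> cube N"
  shows "\<exists>x BB. x \<in> cube N \<and> bsat N f x BB \<and> card BB = bsv N f"
proof -
  have "bsat N f x0 {}" by (simp add: bsat_def)
  hence ne: "{card BB | x BB. x \<in> cube N \<and> bsat N f x BB} \<noteq> {}" using assms by blast
  show ?thesis using Max_in[OF bsv_fin ne] unfolding bsv_def by (smt (verit) mem_Collect_eq)
qed



definition cert :: "nat \<Rightarrow> (bool list \<Rightarrow> bool) \<Rightarrow> bool list \<Rightarrow> nat set \<Rightarrow> bool" where
  "cert N f y K = (K \<subseteq> {..<N} \<and> (\<forall>x\<in>cube N. (\<forall>i\<in>K. x!i = y!i) \<longrightarrow> f x = f y))"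

definition minblk :: "(bool list \<Rightarrow> bool) \<Rightarrow> bool list \<Rightarrow> nat set \<Rightarrow> bool" where
  "minblk f y B = (B \<noteq> {} \<and> f (flip B y) \<noteq> f y \<and> (\<forall>C. C \<subset> B \<longrightarrow> f (flip C y) = f y))"

lemma minblk_exists:
  assumes "finite B" "f (flip B y) \<noteq> f y"
  shows "\<exists>M\<subseteq>B. minblk f y M"
proof -
  obtain M where M: "M \<subseteq> B \<and> f (flip M y) \<noteq> f y"
    "\<forall>C. C \<subseteq> B \<and> f (flip C y) \<noteq> f y \<longrightarrow> card M \<le> card C"
    using ex_has_least_nat[of "\<lambda>C. C \<subseteq> B \<and> f (flip C y) \<noteq> f y" B card] assms by blast
  have "minblk f y M"
    unfolding minblk_def
  proof (intro conjI allI impI)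
    show "M \<noteq> {}" using M by auto
    show "f (flip M y) \<noteq> f y" using M by auto
    fix C assume "C \<subset> M"
    moreover have "finite M" using M assms finite_subset by blast
    ultimately have "card C < card M" by (simp add: psubset_card_mono)
    moreover have "C \<subseteq> B" using M(1) \<open>C \<subset> M\<close> by blast
    ultimately show "f (flip C y) = f y" using M(2) by (meson not_le)
  qed
  thus ?thesis using M by blast
qed

lemma minblk_size:
  assumes y: "y \<in> cube N" and m: "minblk f y B" and BN: "B \<subseteq> {..<N}"
  shows "card B \<le> bsv N f"
proof -
  let ?u = "flip B y"
  let ?BB = "(\<lambda>j. {j}) ` B"
  have "bsat N f ?u ?BB"
    unfolding bsat_def
  proof (intro conjI ballI)
    show "?BB \<subseteq> Pow {..<N}" using BN by auto
    show "pairwise disjnt ?BB" by (auto simp: pairwise_def disjnt_def)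
  next
    fix C assume "C \<in> ?BB"
    then obtain j where j: "j \<in> B" "C = {j}" by auto
    show "C \<noteq> {}" using j by auto
    have "(C - B) \<union> (B - C) = B - {j}" using j by auto
    hence "flip C ?u = flip (B - {j}) y" by (simp add: flip_flip)
    moreover have "f (flip (B - {j}) y) = f y" using m j unfolding minblk_def by blast
    ultimately show "f (flip C ?u) \<noteq> f ?u" using m unfolding minblk_def by simp
  qed
  hence "card ?BB \<le> bsv N f" using bsv_ge[of ?u N f] y by simp
  moreover have "card ?BB = card B" by (simp add: card_image)
  ultimately show ?thesis by simp
qed

lemma cert_exists:
  assumes y: "y \<in> cube N"
  shows "\<exists>K. cert N f y K \<and> card K \<le> bsv N f * bsv N f"
proof -
  let ?P = "\<lambda>MM. MM \<subseteq> Pow {..<N} \<and> pairwise disjnt MM \<and> (\<forall>B\<in>MM. minblk f y B)"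
  have bsatP: "bsat N f y MM" if "?P MM" for MM
    using that unfolding bsat_def minblk_def by blast
  have P0: "\<exists>MM. ?P MM \<and> card MM = 0"
    by (rule exI[of _ "{}"]) simp
  have bnd: "\<forall>k'. (\<exists>MM. ?P MM \<and> card MM = k') \<longrightarrow> k' \<le> N"
    using bsat_card(2) bsatP by blast
  obtain k where k: "\<exists>MM. ?P MM \<and> card MM = k" "\<forall>k'. (\<exists>MM. ?P MM \<and> card MM = k') \<longrightarrow> k' \<le> k"
    using Nat.ex_has_greatest_nat[of "\<lambda>k. \<exists>MM. ?P MM \<and> card MM = k" 0 N, OF P0 bnd] by blast
  obtain MM where MM: "?P MM" "card MM = k" using k by blast
  have finMM: "finite MM" using bsat_card(1)[OF bsatP[OF MM(1)]] .
  let ?K = "\<Union>MM"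
  have cert: "cert N f y ?K"
    unfolding cert_def
  proof (intro conjI ballI impI)
    show "?K \<subseteq> {..<N}" using MM by auto
    fix x assume x: "x \<in> cube N" and agree: "\<forall>i\<in>?K. x!i = y!i"
    show "f x = f y"
    proof (rule ccontr)
      assume ne: "f x \<noteq> f y"
      let ?D = "{i. i < N \<and> y!i \<noteq> x!i}"
      have "flip ?D y = x" using flip_diff[OF y x] .
      hence "f (flip ?D y) \<noteq> f y" using ne by simp
      then obtain M where M: "M \<subseteq> ?D" "minblk f y M" using minblk_exists[of ?D f y] by auto
      have MK: "M \<inter> ?K = {}" using M(1) agree by auto
      have Mne: "M \<noteq> {}" using M(2) minblk_def by blast
      have notin: "M \<notin> MM" using MK Mne by auto
      have MN: "M \<subseteq> {..<N}" using M(1) by auto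
      have disj: "\<forall>B\<in>MM. disjnt M B" using MK by (auto simp: disjnt_def)
      have "?P (insert M MM)"
        using MM(1) M(2) MN disj unfolding pairwise_insert
        by (auto simp: disjnt_sym)
      moreover have "card (insert M MM) = Suc k" using notin finMM MM by simp
      ultimately have "Suc k \<le> k" using k(2) by blast
      thus False by simp
    qed
  qed
  have "card ?K \<le> sum card MM" by (rule card_Union_le_sum_card)
  also have "\<dots> \<le> card MM * bsv N f"
  proof -
    have "\<forall>B\<in>MM. card B \<le> bsv N f" using minblk_size[OF y] MM(1) by blast
    thus ?thesis using sum_bounded_above[of MM card "bsv N f"] by simp
  qed
  also have "card MM \<le> bsv N f" using bsv_ge[OF y bsatP[OF MM(1)]] .
  hence "card MM * bsv N f \<le> bsv N f * bsv N f" by simp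
  finally show ?thesis using cert by blast
qed



definition dt :: "nat \<Rightarrow> (bool list \<Rightarrow> bool) \<Rightarrow> bool list set \<Rightarrow> nat \<Rightarrow> bool" where
  "dt N f S d = (\<exists>t. valid N t \<and> (\<forall>x\<in>S. eval t x = f x \<and> qcount t x \<le> d))"

lemma dt_const: "\<forall>x\<in>S. f x = c \<Longrightarrow> dt N f S d"
  unfolding dt_def by (rule exI[of _ "Leaf c"]) auto

lemma dt_mono: "dt N f S d \<Longrightarrow> d \<le> d' \<Longrightarrow> dt N f S d'"
  unfolding dt_def by (meson order_trans)

lemma dt_query:
  assumes "i < N" "dt N f {x\<in>S. \<not> x!i} d" "dt N f {x\<in>S. x!i} d"
  shows "dt N f S (Suc d)"
proof -
  obtain l where l: "valid N l" "\<forall>x\<in>{x\<in>S. \<not> x!i}. eval l x = f x \<and> qcount l x \<le> d"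
    using assms(2) unfolding dt_def by blast
  obtain r where r: "valid N r" "\<forall>x\<in>{x\<in>S. x!i}. eval r x = f x \<and> qcount r x \<le> d"
    using assms(3) unfolding dt_def by blast
  show ?thesis unfolding dt_def
    by (rule exI[of _ "Node i l r"]) (use assms(1) l r in auto)
qed

lemma dt_queryset:
  assumes "finite K" "K \<subseteq> {..<N}" "\<forall>\<beta>. dt N f {x\<in>S. \<forall>i\<in>K. x!i = \<beta> i} d"
  shows "dt N f S (card K + d)"
  using assms
proof (induction K arbitrary: S rule: finite_induct)
  case empty
  then show ?case by simp
next
  case (insert i K)
  have hc: "dt N f {x\<in>S. x!i = c} (card K + d)" for c
  proof -
    have "\<forall>\<beta>. dt N f {x\<in>{x\<in>S. x!i = c}. \<forall>j\<in>K. x!j = \<beta> j} d"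
    proof
      fix \<beta>
      have e: "{x\<in>{x\<in>S. x!i = c}. \<forall>j\<in>K. x!j = \<beta> j} = {x\<in>S. \<forall>j\<in>insert i K. x!j = (\<beta>(i:=c)) j}"
        using insert(2) by auto
      show "dt N f {x\<in>{x\<in>S. x!i = c}. \<forall>j\<in>K. x!j = \<beta> j} d" unfolding e using insert(5) by blast
    qed
    thus ?thesis by (rule insert(3)[rotated]) (use insert(4) in simp)
  qed
  have "dt N f S (Suc (card K + d))"
    apply (rule dt_query[of i])
    using insert(4) hc[of False] hc[of True] by auto
  thus ?case using insert(1,2) by simp
qed

lemma key_block:
  assumes y: "y \<in> cube N" and z: "z \<in> cube N"
    and agQ: "\<forall>i\<in>Q. z!i = y!i" and fy: "f y" and fz: "\<not> f z"
    and bs: "bsat N f z BB" and BQ: "\<Union>BB \<subseteq> Q" and K: "cert N f y K"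
  shows "bsat N f z (insert {i\<in>K. z!i \<noteq> y!i} BB) \<and> card (insert {i\<in>K. z!i \<noteq> y!i} BB) = Suc (card BB)
         \<and> \<Union>(insert {i\<in>K. z!i \<noteq> y!i} BB) \<subseteq> Q \<union> K"
proof -
  let ?B = "{i\<in>K. z!i \<noteq> y!i}"
  have KN: "K \<subseteq> {..<N}" using K cert_def by blast
  have Bne: "?B \<noteq> {}"
  proof
    assume "?B = {}"
    hence "\<forall>i\<in>K. z!i = y!i" by auto
    hence "f z = f y" using K z unfolding cert_def by blast
    thus False using fy fz by simp
  qed
  have "\<forall>i\<in>K. flip ?B z ! i = y!i"
    using KN z by (auto simp: cube_def)
  hence "f (flip ?B z) = f y" using K z unfolding cert_def by (meson flip_cube)
  hence sens: "f (flip ?B z) \<noteq> f z" using fy fz by simp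
  have BQd: "?B \<inter> Q = {}" using agQ by auto
  have disj: "\<forall>C\<in>BB. disjnt ?B C" using BQd BQ by (auto simp: disjnt_def)
  have notin: "?B \<notin> BB" using disj Bne by (auto simp: disjnt_def)
  have fin: "finite BB" using bsat_card(1)[OF bs] .
  have "bsat N f z (insert ?B BB)"
    using bs KN disj Bne sens unfolding bsat_def pairwise_insert by (auto simp: disjnt_sym)
  moreover have "card (insert ?B BB) = Suc (card BB)" using notin fin by simp
  moreover have "\<Union>(insert ?B BB) \<subseteq> Q \<union> K" using BQ by auto
  ultimately show ?thesis by blast
qed

lemma nisan:
  fixes n :: nat
  assumes "S \<subseteq> cube N" "\<forall>x\<in>S. \<forall>y\<in>S. \<forall>i\<in>Q. x!i = y!i"
    "\<forall>z\<in>S. \<not> f z \<longrightarrow> (\<exists>BB. bsat N f z BB \<and> \<Union>BB \<subseteq> Q \<and> bsv N f \<le> card BB + n)"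
  shows "dt N f S (n * (bsv N f * bsv N f))"
  using assms
proof (induction n arbitrary: S Q)
  case 0
  show ?case
  proof (cases "\<exists>y\<in>S. f y")
    case False
    then show ?thesis by (intro dt_const[of _ _ False]) auto
  next
    case True
    then obtain y where y: "y \<in> S" "f y" by blast
    have "\<forall>z\<in>S. f z = True"
    proof (rule ccontr)
      assume "\<not> (\<forall>z\<in>S. f z = True)"
      then obtain z where z: "z \<in> S" "\<not> f z" by blast
      obtain BB where BB: "bsat N f z BB" "\<Union>BB \<subseteq> Q" "bsv N f \<le> card BB"
        using 0(3) z by auto
      obtain K where K: "cert N f y K" using cert_exists[of y N f] y 0(1) by blast
      have "bsat N f z (insert {i\<in>K. z!i \<noteq> y!i} BB) \<and> card (insert {i\<in>K. z!i \<noteq> y!i} BB) = Suc (card BB)"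
        using key_block[of y N z Q f BB K] y z 0(1,2) BB K by blast
      hence "Suc (card BB) \<le> bsv N f" using bsv_ge[of z N f] z 0(1) by (metis subsetD)
      thus False using BB(3) by simp
    qed
    then show ?thesis by (rule dt_const)
  qed
next
  case (Suc n)
  show ?case
  proof (cases "\<exists>y\<in>S. f y")
    case False
    then show ?thesis by (intro dt_const[of _ _ False]) auto
  next
    case True
    then obtain y where y: "y \<in> S" "f y" by blast
    have ycube: "y \<in> cube N" using y Suc.prems(1) by blast
    obtain K where K: "cert N f y K" "card K \<le> bsv N f * bsv N f" using cert_exists[OF ycube] by blast
    have KN: "K \<subseteq> {..<N}" using K cert_def by blast
    have finK: "finite K" using KN finite_subset by blast
    have "\<forall>\<beta>. dt N f {x\<in>S. \<forall>i\<in>K. x!i = \<beta> i} (n * (bsv N f * bsv N f))"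
    proof
      fix \<beta>
      let ?S' = "{x\<in>S. \<forall>i\<in>K. x!i = \<beta> i}"
      show "dt N f ?S' (n * (bsv N f * bsv N f))"
      proof (rule Suc.IH[of ?S' "Q \<union> K"])
        show "?S' \<subseteq> cube N" using Suc.prems(1) by blast
        show "\<forall>x\<in>?S'. \<forall>y\<in>?S'. \<forall>i\<in>Q \<union> K. x!i = y!i" using Suc.prems(2) by auto
        show "\<forall>z\<in>?S'. \<not> f z \<longrightarrow> (\<exists>BB. bsat N f z BB \<and> \<Union>BB \<subseteq> Q \<union> K \<and> bsv N f \<le> card BB + n)"
        proof (intro ballI impI)
          fix z assume z: "z \<in> ?S'" "\<not> f z"
          obtain BB where BB: "bsat N f z BB" "\<Union>BB \<subseteq> Q" "bsv N f \<le> card BB + Suc n"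
            using Suc.prems(3) z by auto
          have zc: "z \<in> cube N" using z Suc.prems(1) by blast
          have "\<forall>i\<in>Q. z!i = y!i" using Suc.prems(2) z y by blast
          hence kb: "bsat N f z (insert {i\<in>K. z!i \<noteq> y!i} BB) \<and> card (insert {i\<in>K. z!i \<noteq> y!i} BB) = Suc (card BB)
         \<and> \<Union>(insert {i\<in>K. z!i \<noteq> y!i} BB) \<subseteq> Q \<union> K"
            using key_block[of y N z Q f BB K] ycube zc y z BB K by blast
          show "\<exists>BB. bsat N f z BB \<and> \<Union>BB \<subseteq> Q \<union> K \<and> bsv N f \<le> card BB + n"
            apply (rule exI[of _ "insert {i\<in>K. z!i \<noteq> y!i} BB"]) using kb BB(3) by simp
        qed
      qed
    qed
    hence "dt N f S (card K + n * (bsv N f * bsv N f))" by (rule dt_queryset[OF finK KN])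
    thus ?thesis by (rule dt_mono) (use K(2) in simp)
  qed
qed

lemma tree_exists:
  "\<exists>t. valid N t \<and> (\<forall>x\<in>cube N. eval t x = f x \<and> qcount t x \<le> bsv N f ^ 3)"
proof -
  have "dt N f (cube N) (bsv N f * (bsv N f * bsv N f))"
    by (rule nisan[of _ _ "{}"]) (auto intro: exI[of _ "{}"] simp: bsat_def)
  thus ?thesis unfolding dt_def by (simp add: power3_eq_cube mult.assoc)
qed



lemma flip_union_disj: "A \<inter> B = {} \<Longrightarrow> flip A (flip B x) = flip (A \<union> B) x"
proof -
  assume "A \<inter> B = {}"
  hence "(A - B) \<union> (B - A) = A \<union> B" by blast
  thus ?thesis by (simp add: flip_flip)
qed

lemma structure_lemma:
  assumes x: "x \<in> cube N" and bs: "bsat N f x BB" and b: "card BB = b" "b > 0"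
  shows "\<exists>z U DD. z \<in> cube N \<and> U \<subseteq> BB \<and> U \<noteq> {} \<and>
     (\<forall>D\<in>DD. D \<subseteq> U \<and> 2 * card U \<le> 3 * card D \<and> f (flip (\<Union>D) z) \<noteq> f z) \<and>
     (\<forall>H\<subseteq>BB. 6 * card H < b \<longrightarrow> (\<exists>D\<in>DD. D \<inter> H = {}))"
proof -
  have finBB: "finite BB" using bsat_card(1)[OF bs] .
  have disj: "pairwise disjnt BB" and sens: "\<forall>B\<in>BB. B \<noteq> {} \<and> f (flip B x) \<noteq> f x"
    using bs unfolding bsat_def by auto
  show ?thesis
  proof (cases "\<forall>H\<subseteq>BB. 6 * card H < b \<longrightarrow> (\<exists>D\<subseteq>BB-H. 2*b \<le> 3 * card D \<and> f (flip (\<Union>D) x) \<noteq> f x)")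
    case True
    let ?DD = "{D. D \<subseteq> BB \<and> 2*b \<le> 3 * card D \<and> f (flip (\<Union>D) x) \<noteq> f x}"
    show ?thesis
    proof (intro exI conjI)
      show "x \<in> cube N" by fact
      show "BB \<subseteq> BB" by simp
      show "BB \<noteq> {}" using b by auto
      show "\<forall>D\<in>?DD. D \<subseteq> BB \<and> 2 * card BB \<le> 3 * card D \<and> f (flip (\<Union>D) x) \<noteq> f x"
        using b by auto
      show "\<forall>H\<subseteq>BB. 6 * card H < b \<longrightarrow> (\<exists>D\<in>?DD. D \<inter> H = {})"
      proof (intro allI impI)
        fix H assume "H \<subseteq> BB" "6 * card H < b"
        then obtain D where "D\<subseteq>BB-H" "2*b \<le> 3 * card D" "f (flip (\<Union>D) x) \<noteq> f x"
          using True by blast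
        thus "\<exists>D\<in>?DD. D \<inter> H = {}" by blast
      qed
    qed
  next
    case False
    then obtain H where H: "H \<subseteq> BB" "6 * card H < b"
      "\<forall>D\<subseteq>BB-H. 2*b \<le> 3 * card D \<longrightarrow> f (flip (\<Union>D) x) = f x" by blast
    let ?V = "BB - H"
    have finH: "finite H" using H(1) finBB finite_subset by blast
    have cV: "card ?V = b - card H" using H(1) finH b(1) by (simp add: card_Diff_subset)
    have "card ?V > 0" using cV H(2) by linarith
    hence "?V \<noteq> {}" by (metis card.empty less_irrefl)
    then obtain B0 where B0: "B0 \<in> ?V" by blast
    let ?z = "flip B0 x"
    let ?U = "?V - {B0}"
    have cU: "card ?U = b - card H - 1" using cV B0 finBB by simp
    let ?DD = "{D. D \<subseteq> ?U \<and> 2 * card ?U \<le> 3 * card D \<and> 2*b \<le> 3 * (card D + 1)}"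
    have fz: "f ?z \<noteq> f x" using sens B0 by blast
    have key: "f (flip (\<Union>D) ?z) = f x" if D: "D \<subseteq> ?U" "2*b \<le> 3 * (card D + 1)" for D
    proof -
      have "\<Union>D \<inter> B0 = {}"
      proof -
        have "\<forall>C\<in>D. disjnt C B0" using D(1) B0 disj unfolding pairwise_def by blast
        thus ?thesis by (auto simp: disjnt_def)
      qed
      hence e: "flip (\<Union>D) ?z = flip (\<Union>(insert B0 D)) x" by (simp add: flip_union_disj Un_commute)
      have finD: "finite D" using D(1) finBB finite_subset by blast
      have "B0 \<notin> D" using D(1) by blast
      hence "card (insert B0 D) = card D + 1" using finD by simp
      moreover have "insert B0 D \<subseteq> ?V" using D(1) B0 by blast
      ultimately have "insert B0 D \<subseteq> ?V" "2*b \<le> 3 * card (insert B0 D)" using D(2) by auto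
      hence "f (flip (\<Union>(insert B0 D)) x) = f x" using H(3) by blast
      thus ?thesis using e by simp
    qed
    have Une: "?U \<noteq> {}"
    proof
      assume U0: "?U = {}"
      hence V1: "?V = {B0}" using B0 by blast
      hence "card ?V = 1" by simp
      hence "2*b \<le> 3 * card ?V" using cV H(2) by linarith
      hence "f (flip (\<Union>?V) x) = f x" using H(3) by blast
      thus False using V1 fz by simp
    qed
    show ?thesis
    proof (intro exI conjI)
      show "?z \<in> cube N" using x by simp
      show "?U \<subseteq> BB" by blast
      show "?U \<noteq> {}" by fact
      show "\<forall>D\<in>?DD. D \<subseteq> ?U \<and> 2 * card ?U \<le> 3 * card D \<and> f (flip (\<Union>D) ?z) \<noteq> f ?z"
      proof
        fix D assume "D \<in> ?DD"
        hence D: "D \<subseteq> ?U" "2 * card ?U \<le> 3 * card D" "2*b \<le> 3 * (card D + 1)" by auto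
        show "D \<subseteq> ?U \<and> 2 * card ?U \<le> 3 * card D \<and> f (flip (\<Union>D) ?z) \<noteq> f ?z"
          using key[OF D(1) D(3)] fz D(1,2) by simp
      qed
      show "\<forall>H'\<subseteq>BB. 6 * card H' < b \<longrightarrow> (\<exists>D\<in>?DD. D \<inter> H' = {})"
      proof (intro allI impI)
        fix H' assume H': "H' \<subseteq> BB" "6 * card H' < b"
        let ?D = "?U - H'"
        have finH': "finite H'" using H'(1) finBB finite_subset by blast
        have cD: "card ?D \<ge> card ?U - card H'" by (rule diff_card_le_card_Diff[OF finH'])
        have cU': "card ?U + card H + 1 = b" using cU H(2) by linarith
        have cD': "card ?D + card H' \<ge> card ?U" using cD by linarith
        have "2 * card ?U \<le> 3 * card ?D"
          using cD' cU' H(2) H'(2) by linarith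
        moreover have "2*b \<le> 3 * card ?D + 3"
          using cD' cU' H(2) H'(2) by linarith
        ultimately have "2 * card ?U \<le> 3 * card ?D" "2*b \<le> 3 * (card ?D + 1)" by simp_all
        hence mem: "?D \<in> ?DD" by blast
        have "?D \<inter> H' = {}" by blast
        with mem show "\<exists>D\<in>?DD. D \<inter> H' = {}" by (rule bexI[rotated])
      qed
    qed
  qed
qed



fun qpath :: "dtree \<Rightarrow> bool list \<Rightarrow> nat set" where
  "qpath (Leaf b) x = {}"
| "qpath (Node i l r) x = insert i (if x!i then qpath r x else qpath l x)"

lemma qpath_fin: "finite (qpath t x)"
  by (induction t) auto

lemma qpath_card: "card (qpath t x) \<le> qcount t x"
proof (induction t)
  case (Leaf b) then show ?case by simp
next
  case (Node i l r)
  have "card (qpath (Node i l r) x) \<le> Suc (card (if x!i then qpath r x else qpath l x))"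
    by (simp add: card_insert_le_m1 qpath_fin card_insert_if)
  then show ?case using Node by (auto split: if_splits)
qed

lemma qpath_valid: "valid N t \<Longrightarrow> qpath t x \<subseteq> {..<N}"
  by (induction t) auto

lemma qpath_eval: "\<forall>i\<in>qpath t x. y!i = x!i \<Longrightarrow> eval t y = eval t x"
  by (induction t) auto

lemma qcount0: "qcount t x = 0 \<Longrightarrow> \<exists>c. t = Leaf c"
  by (cases t) auto

lemma structure_obtain:
  assumes "x \<in> cube N" "bsat N f x BB" "card BB = b" "b > 0"
  obtains z U DD where "z \<in> cube N" "U \<subseteq> BB" "U \<noteq> {}"
     "\<forall>D\<in>DD. D \<subseteq> U \<and> 2 * card U \<le> 3 * card D \<and> f (flip (\<Union>D) z) \<noteq> f z"
     "\<forall>H\<subseteq>BB. 6 * card H < b \<longrightarrow> (\<exists>D\<in>DD. D \<inter> H = {})"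
  apply (insert structure_lemma[OF assms])
  apply (elim exE conjE)
  apply (rule that)
      apply assumption+
  done

theorem main:
  fixes N :: nat and f :: "bool list \<Rightarrow> bool"
  assumes "\<exists>x\<in>cube N. \<exists>y\<in>cube N. f x \<noteq> f y"
  shows "\<exists>P \<subseteq> cube N. R N f P = 1 \<and> R0 N f P \<ge> R0 N f (cube N) powr (1/3) / 6"
proof -
  obtain x1 y1 where xy: "x1 \<in> cube N" "y1 \<in> cube N" "f x1 \<noteq> f y1" using assms by blast
  define b where "b = bsv N f"
  have b1: "b > 0"
  proof -
    let ?D = "{i. i < N \<and> x1!i \<noteq> y1!i}"
    have fl: "flip ?D x1 = y1" by (rule flip_diff[OF xy(1,2)])
    have "?D \<noteq> {}"
    proof
      assume e: "?D = {}"
      have "x1 = y1" using fl e by (metis flip_empty)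
      thus False using xy(3) by simp
    qed
    hence "bsat N f x1 {?D}" using fl xy(3) unfolding bsat_def by auto
    hence "card {?D} \<le> b" unfolding b_def using bsv_ge xy(1) by blast
    thus ?thesis by simp
  qed
  obtain x0 BB where x0: "x0 \<in> cube N" "bsat N f x0 BB" "card BB = b"
    using bsv_attained[OF xy(1), of f] unfolding b_def by blast
  obtain z U DD where zU: "z \<in> cube N" "U \<subseteq> BB" "U \<noteq> {}"
     "\<forall>D\<in>DD. D \<subseteq> U \<and> 2 * card U \<le> 3 * card D \<and> f (flip (\<Union>D) z) \<noteq> f z"
     "\<forall>H\<subseteq>BB. 6 * card H < b \<longrightarrow> (\<exists>D\<in>DD. D \<inter> H = {})"
    by (rule structure_obtain[OF x0(1,2,3) b1])
  have finBB: "finite BB" using bsat_card(1)[OF x0(2)] .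
  have disj: "pairwise disjnt BB" and sensBB: "\<forall>B\<in>BB. B \<noteq> {} \<and> B \<subseteq> {..<N}"
    using x0(2) unfolding bsat_def by auto
  have finU: "finite U" using zU(2) finBB finite_subset by blast
  have zlen: "length z = N" using zU(1) cube_def by simp
  have hit: "\<exists>D\<in>DD. \<Union>D \<inter> Q = {}" if Q: "finite Q" "6 * card Q < b" for Q
  proof -
    let ?H = "{B\<in>BB. B \<inter> Q \<noteq> {}}"
    let ?g = "\<lambda>B. SOME q. q \<in> B \<inter> Q"
    have gin: "?g B \<in> B \<inter> Q" if "B \<in> ?H" for B
    proof -
      from that obtain q where "q \<in> B \<inter> Q" by blast
      thus ?thesis by (rule someI)
    qed
    have "inj_on ?g ?H"
    proof (rule inj_onI)
      fix B1 B2 assume B: "B1 \<in> ?H" "B2 \<in> ?H" "?g B1 = ?g B2"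
      hence c: "?g B1 \<in> B1 \<inter> B2" using gin[OF B(1)] gin[OF B(2)] by simp
      have B12: "B1 \<in> BB" "B2 \<in> BB" using B(1,2) by simp_all
      show "B1 = B2"
      proof (rule ccontr)
        assume "B1 \<noteq> B2"
        hence "disjnt B1 B2" using disj B12 unfolding pairwise_def by blast
        thus False using c unfolding disjnt_def by blast
      qed
    qed
    moreover have "?g ` ?H \<subseteq> Q" using gin by blast
    ultimately have "card ?H \<le> card Q" by (rule card_inj_on_le[OF _ _ Q(1)])
    hence c6: "6 * card ?H < b" using Q(2) by linarith
    have sub: "?H \<subseteq> BB" by blast
    obtain D where D: "D \<in> DD" "D \<inter> ?H = {}" using zU(5)[rule_format, OF sub c6] by blast
    have "\<Union>D \<inter> Q = {}"
    proof -
      have "\<forall>B\<in>D. B \<inter> Q = {}"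
      proof
        fix B assume "B \<in> D"
        moreover have "B \<in> BB" using \<open>B \<in> D\<close> D(1) zU(2,4) by blast
        ultimately show "B \<inter> Q = {}" using D(2) by blast
      qed
      thus ?thesis by blast
    qed
    thus ?thesis using D(1) by blast
  qed
  define P where "P = insert z ((\<lambda>D. flip (\<Union>D) z) ` DD)"
  have Pcube: "P \<subseteq> cube N" unfolding P_def using zU(1) by auto
  obtain D0 where D0: "D0 \<in> DD" using hit[of "{}"] b1 by auto
  define w0 where "w0 = flip (\<Union>D0) z"
  have w0: "w0 \<in> P" "f w0 \<noteq> f z" using D0 zU(4) unfolding P_def w0_def by auto
  have zP: "z \<in> P" unfolding P_def by simp
  define r where "r = (\<lambda>B::nat set. SOME i. i \<in> B)"
  have rB: "r B \<in> B" if "B \<in> U" for B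
    using that zU(2) sensBB unfolding r_def by (metis ex_in_conv someI_ex subsetD)
  define tr where "tr = (\<lambda>B. Node (r B) (Leaf (if z!(r B) then \<not> f z else f z)) (Leaf (if z!(r B) then f z else \<not> f z)))"
  have evtr: "eval (tr B) x = (if x!(r B) = z!(r B) then f z else \<not> f z)" for B x
    unfolding tr_def by auto
  define A1 where "A1 = map_pmf tr (pmf_of_set U)"
  have setA1: "set_pmf A1 = tr ` U" unfolding A1_def using finU zU(3) by simp
  have Ralg1: "R_alg N f P 1"
    unfolding R_alg_def
  proof (intro exI conjI ballI)
    show "valid_alg N A1" unfolding valid_alg_def setA1
      using rB zU(2) sensBB by (auto simp: tr_def)
  next
    fix t x assume "t \<in> set_pmf A1" "x \<in> P"
    thus "qcount t x \<le> 1" unfolding setA1 tr_def by auto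
  next
    fix x assume xP: "x \<in> P"
    have pr: "measure_pmf.prob A1 {t. eval t x \<noteq> f x} = real (card (U \<inter> {B. eval (tr B) x \<noteq> f x})) / real (card U)"
      unfolding A1_def using finU zU(3) by (simp add: measure_pmf_of_set vimage_def)
    have cU: "card U > 0" using finU zU(3) by (simp add: card_gt_0_iff)
    show "measure_pmf.prob A1 {t. eval t x \<noteq> f x} \<le> 1/3"
    proof (cases "x = z")
      case True
      hence "U \<inter> {B. eval (tr B) x \<noteq> f x} = {}" using evtr by auto
      thus ?thesis using pr by simp
    next
      case False
      then obtain D where D: "D \<in> DD" "x = flip (\<Union>D) z" using xP unfolding P_def by auto
      have DU: "D \<subseteq> U" "2 * card U \<le> 3 * card D" "f x \<noteq> f z" using zU(4) D by auto
      have sub: "U \<inter> {B. eval (tr B) x \<noteq> f x} \<subseteq> U - D"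
      proof
        fix B assume B: "B \<in> U \<inter> {B. eval (tr B) x \<noteq> f x}"
        show "B \<in> U - D"
        proof (rule ccontr)
          assume "B \<notin> U - D"
          hence BD: "B \<in> D" using B by blast
          have rU: "r B \<in> \<Union>D" using rB BD DU(1) by blast
          have "r B < N" using rB[of B] B zU(2) sensBB by blast
          hence "x!(r B) \<noteq> z!(r B)" using D(2) rU zlen by simp
          hence "eval (tr B) x = f x" using evtr DU(3) by auto
          thus False using B by blast
        qed
      qed
      have "card (U \<inter> {B. eval (tr B) x \<noteq> f x}) \<le> card (U - D)"
        by (rule card_mono) (use finU sub in auto)
      also have "card (U - D) = card U - card D" using DU(1) finU by (meson card_Diff_subset finite_subset)
      finally have c: "3 * card (U \<inter> {B. eval (tr B) x \<noteq> f x}) \<le> card U" using DU(2) by linarith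
      have "real (card (U \<inter> {B. eval (tr B) x \<noteq> f x})) / real (card U) \<le> 1/3"
        using c cU by (simp add: divide_simps)
      thus ?thesis using pr by simp
    qed
  qed
  have notR0: "\<not> R_alg N f P 0"
  proof
    assume "R_alg N f P 0"
    then obtain A where A: "\<forall>x\<in>P. measure_pmf.prob A {t. eval t x \<noteq> f x} \<le> 1/3"
      "\<forall>t\<in>set_pmf A. \<forall>x\<in>P. qcount t x \<le> 0" unfolding R_alg_def by blast
    let ?E1 = "{t. eval t z \<noteq> f z}" and ?E2 = "{t. eval t w0 \<noteq> f w0}"
    have "\<forall>t\<in>set_pmf A. t \<in> ?E1 \<union> ?E2"
    proof
      fix t assume "t \<in> set_pmf A"
      hence "qcount t z = 0" using A(2) zP by blast
      then obtain c where "t = Leaf c" using qcount0 by blast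
      thus "t \<in> ?E1 \<union> ?E2" using w0(2) by auto
    qed
    hence "measure_pmf.prob A (?E1 \<union> ?E2) = 1"
      by (subst measure_pmf.prob_eq_1) (auto simp: AE_measure_pmf_iff)
    moreover have "measure_pmf.prob A (?E1 \<union> ?E2) \<le> measure_pmf.prob A ?E1 + measure_pmf.prob A ?E2"
      by (rule measure_Un_le) auto
    moreover have "measure_pmf.prob A ?E1 \<le> 1/3" "measure_pmf.prob A ?E2 \<le> 1/3"
      using A(1) zP w0(1) by auto
    ultimately show False by linarith
  qed
  have R1: "R N f P = 1"
    unfolding R_def
  proof (rule Least_equality)
    show "R_alg N f P 1" by fact
    fix d assume "R_alg N f P d"
    thus "1 \<le> d" using notR0 by (cases d) auto
  qed
  have lb_tree: "6 * qcount t z \<ge> b" if t: "valid N t" "\<forall>x\<in>P. eval t x = f x" for t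
  proof (rule ccontr)
    assume "\<not> 6 * qcount t z \<ge> b"
    hence c6: "6 * card (qpath t z) < b" using qpath_card[of t z] by linarith
    from hit[OF qpath_fin c6] obtain D where D: "D \<in> DD" "\<Union>D \<inter> qpath t z = {}" ..
    let ?w = "flip (\<Union>D) z"
    have wP: "?w \<in> P" using D unfolding P_def by auto
    have "\<forall>i\<in>qpath t z. ?w!i = z!i"
    proof
      fix i assume i: "i \<in> qpath t z"
      hence "i < length z" using qpath_valid[OF t(1), of z] zlen by auto
      moreover have "i \<notin> \<Union>D" using i D(2) by blast
      ultimately show "?w!i = z!i" by simp
    qed
    hence "eval t ?w = eval t z" by (rule qpath_eval)
    hence "f ?w = f z" using t(2) wP zP by simp
    thus False using zU(4) D(1) by blast
  qed
  obtain t0 where t0: "valid N t0" "\<forall>x\<in>cube N. eval t0 x = f x \<and> qcount t0 x \<le> b ^ 3"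
    using tree_exists[of N f] unfolding b_def by blast
  have upper: "(INF A\<in>{A. valid_alg N A \<and> (\<forall>t\<in>set_pmf A. \<forall>x\<in>S. eval t x = f x)}.
      SUP x\<in>S. \<integral>\<^sup>+ t. ennreal (real (qcount t x)) \<partial>(measure_pmf A)) \<le> ennreal (real (b^3))"
    if S: "S \<subseteq> cube N" for S
  proof -
    have mem: "return_pmf t0 \<in> {A. valid_alg N A \<and> (\<forall>t\<in>set_pmf A. \<forall>x\<in>S. eval t x = f x)}"
      using t0 S unfolding valid_alg_def by auto
    have "(SUP x\<in>S. \<integral>\<^sup>+ t. ennreal (real (qcount t x)) \<partial>(measure_pmf (return_pmf t0))) \<le> ennreal (real (b^3))"
    proof (rule SUP_least)
      fix x assume "x \<in> S"
      hence "qcount t0 x \<le> b^3" using t0 S by blast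
      thus "(\<integral>\<^sup>+ t. ennreal (real (qcount t x)) \<partial>(measure_pmf (return_pmf t0))) \<le> ennreal (real (b^3))"
        by (simp add: ennreal_leI)
    qed
    thus ?thesis by (rule INF_lower2[OF mem])
  qed
  have lower: "ennreal (real b / 6) \<le> (INF A\<in>{A. valid_alg N A \<and> (\<forall>t\<in>set_pmf A. \<forall>x\<in>P. eval t x = f x)}.
      SUP x\<in>P. \<integral>\<^sup>+ t. ennreal (real (qcount t x)) \<partial>(measure_pmf A))"
  proof (rule INF_greatest)
    fix A assume A: "A \<in> {A. valid_alg N A \<and> (\<forall>t\<in>set_pmf A. \<forall>x\<in>P. eval t x = f x)}"
    have "ennreal (real b / 6) = (\<integral>\<^sup>+ t. ennreal (real b / 6) \<partial>(measure_pmf A))"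
      by (simp add: measure_pmf.emeasure_space_1)
    also have "\<dots> \<le> (\<integral>\<^sup>+ t. ennreal (real (qcount t z)) \<partial>(measure_pmf A))"
    proof (rule nn_integral_mono_AE)
      show "AE t in measure_pmf A. ennreal (real b / 6) \<le> ennreal (real (qcount t z))"
        unfolding AE_measure_pmf_iff
      proof
        fix t assume "t \<in> set_pmf A"
        hence "6 * qcount t z \<ge> b" using A lb_tree unfolding valid_alg_def by blast
        hence "real b / 6 \<le> real (qcount t z)" by simp
        thus "ennreal (real b / 6) \<le> ennreal (real (qcount t z))" by (rule ennreal_leI)
      qed
    qed
    also have "\<dots> \<le> (SUP x\<in>P. \<integral>\<^sup>+ t. ennreal (real (qcount t x)) \<partial>(measure_pmf A))"
      by (rule SUP_upper[OF zP])
    finally show "ennreal (real b / 6) \<le> (SUP x\<in>P. \<integral>\<^sup>+ t. ennreal (real (qcount t x)) \<partial>(measure_pmf A))" .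
  qed
  have R0P: "R0 N f P \<ge> real b / 6"
  proof -
    have "enn2real (ennreal (real b / 6)) \<le> R0 N f P"
      unfolding R0_def
      by (rule enn2real_mono[OF lower]) (use upper[OF Pcube] in \<open>simp add: order.strict_trans1\<close>)
    thus ?thesis by simp
  qed
  have R0C: "R0 N f (cube N) \<le> real b ^ 3"
  proof -
    have "R0 N f (cube N) \<le> enn2real (ennreal (real (b^3)))"
      unfolding R0_def by (rule enn2real_mono[OF upper]) simp_all
    thus ?thesis by simp
  qed
  have R0C0: "R0 N f (cube N) \<ge> 0" unfolding R0_def by (rule enn2real_nonneg)
  have "R0 N f (cube N) powr (1/3) \<le> (real b ^ 3) powr (1/3)"
    by (rule powr_mono2[OF _ R0C0 R0C]) simp
  also have "(real b ^ 3) powr (1/3) = real b"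
  proof -
    have bp: "real b > 0" using b1 by simp
    have e: "real b ^ 3 = real b powr (real 3)" using powr_realpow[OF bp, of 3] by simp
    have "(real b ^ 3) powr (1/3) = real b powr (real 3 * (1/3))" unfolding e by (rule powr_powr)
    also have "\<dots> = real b" using bp by simp
    finally show ?thesis .
  qed
  finally have "R0 N f (cube N) powr (1/3) / 6 \<le> R0 N f P" using R0P by linarith
  thus ?thesis using Pcube R1 by blast
qed


theorem theorem29:
  fixes N :: nat and f :: "bool list \<Rightarrow> bool"
  assumes "\<exists>x\<in>cube N. \<exists>y\<in>cube N. f x \<noteq> f y"
  shows "\<exists>P \<subseteq> cube N. R N f P = 1 \<and> R0 N f P \<ge> R0 N f (cube N) powr (1/3) / 6"
  using main[OF assms] .

end
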